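(* For any positive integer $k$, there exist connected graphs $H$ and $G$ with $H \subset G$ such that both $\frac{\dim_f(H)}{\dim_f(G)}$ and $\frac{\dim_{k,f}(H)}{\dim_{k,f}(G)}$ can be arbitrarily large; that is, for every real $C>0$ there exist connected graphs $H\subset G$ with $\frac{\dim_f(H)}{\dim_f(G)}>C$ and $\frac{\dim_{k,f}(H)}{\dim_{k,f}(G)}>C$.
   Context: $H\subset G$ means $H$ is a subgraph of $G$. $d(x,y)$ is the distance in $G$. For a function $g$ on $V(G)$ and $U\subseteq V(G)$, $g(U)=\sum_{s\in U}g(s)$. $R\{x,y\}=\{z: d(x,z)\ne d(y,z)\}$; $g:V(G)\to[0,1]$ is a resolving function if $g(R\{x,y\})\ge1$ for all distinct $x,y$; $\dim_f(G)$ is the minimum of $g(V(G))$ over resolving functions. For a positive integer $k$, $d_k(x,y)=\min\{d(x,y),k+1\}$, $R_k\{x,y\}=\{z: d_k(x,z)\neq d_k(y,z)\}$; $h:V(G)\to[0,1]$ is a $k$-truncated resolving function if $h(R_k\{x,y\})\ge 1$ for all distinct $x,y$, and $\dim_{k,f}(G)$ is the minimum of $h(V(G))$ over such $h$. *)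

theory Defs
  imports Complex_Main
begin

type_synonym graph = "nat set \<times> nat set set"

definition verts :: "graph \<Rightarrow> nat set" where "verts G = fst G"
definition edges :: "graph \<Rightarrow> nat set set" where "edges G = snd G"

definition simple_graph :: "graph \<Rightarrow> bool" where
  "simple_graph G \<longleftrightarrow> finite (verts G) \<and>
     (\<forall>e\<in>edges G. \<exists>x y. x \<noteq> y \<and> x \<in> verts G \<and> y \<in> verts G \<and> e = {x, y})"

definition walk :: "graph \<Rightarrow> nat list \<Rightarrow> bool" where
  "walk G xs \<longleftrightarrow> xs \<noteq> [] \<and> set xs \<subseteq> verts G \<and>
     (\<forall>i. Suc i < length xs \<longrightarrow> {xs ! i, xs ! Suc i} \<in> edges G)"

definition reach_in :: "graph \<Rightarrow> nat \<Rightarrow> nat \<Rightarrow> nat \<Rightarrow> bool" where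
  "reach_in G n x y \<longleftrightarrow> (\<exists>xs. walk G xs \<and> hd xs = x \<and> last xs = y \<and> length xs = Suc n)"

definition connected_graph :: "graph \<Rightarrow> bool" where
  "connected_graph G \<longleftrightarrow> simple_graph G \<and> verts G \<noteq> {} \<and>
     (\<forall>x\<in>verts G. \<forall>y\<in>verts G. \<exists>n. reach_in G n x y)"

definition gdist :: "graph \<Rightarrow> nat \<Rightarrow> nat \<Rightarrow> nat" where
  "gdist G x y = (LEAST n. reach_in G n x y)"

definition subgraph :: "graph \<Rightarrow> graph \<Rightarrow> bool" where
  "subgraph H G \<longleftrightarrow> verts H \<subseteq> verts G \<and> edges H \<subseteq> edges G"

definition resolving_set_of :: "graph \<Rightarrow> nat \<Rightarrow> nat \<Rightarrow> nat set" where
  "resolving_set_of G x y = {z \<in> verts G. gdist G x z \<noteq> gdist G y z}"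

definition resolving_function :: "graph \<Rightarrow> (nat \<Rightarrow> real) \<Rightarrow> bool" where
  "resolving_function G g \<longleftrightarrow> (\<forall>v\<in>verts G. 0 \<le> g v \<and> g v \<le> 1) \<and>
     (\<forall>x\<in>verts G. \<forall>y\<in>verts G. x \<noteq> y \<longrightarrow> sum g (resolving_set_of G x y) \<ge> 1)"

definition frac_dim :: "graph \<Rightarrow> real" where
  "frac_dim G = Inf {sum g (verts G) | g. resolving_function G g}"

definition tdist :: "nat \<Rightarrow> graph \<Rightarrow> nat \<Rightarrow> nat \<Rightarrow> nat" where
  "tdist k G x y = min (gdist G x y) (k + 1)"

definition trunc_resolving_set_of :: "nat \<Rightarrow> graph \<Rightarrow> nat \<Rightarrow> nat \<Rightarrow> nat set" where
  "trunc_resolving_set_of k G x y = {z \<in> verts G. tdist k G x z \<noteq> tdist k G y z}"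

definition trunc_resolving_function :: "nat \<Rightarrow> graph \<Rightarrow> (nat \<Rightarrow> real) \<Rightarrow> bool" where
  "trunc_resolving_function k G h \<longleftrightarrow> (\<forall>v\<in>verts G. 0 \<le> h v \<and> h v \<le> 1) \<and>
     (\<forall>x\<in>verts G. \<forall>y\<in>verts G. x \<noteq> y \<longrightarrow> sum h (trunc_resolving_set_of k G x y) \<ge> 1)"

definition trunc_frac_dim :: "nat \<Rightarrow> graph \<Rightarrow> real" where
  "trunc_frac_dim k G = Inf {sum h (verts G) | h. trunc_resolving_function k G h}"

end

theory Submission imports Defs begin

lemma reach0: "x \<in> verts G \<Longrightarrow> reach_in G 0 x x"
  unfolding reach_in_def walk_def by (rule exI[of _ "[x]"]) auto

lemma reach0_eq: "reach_in G 0 x y \<Longrightarrow> x = y"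
  unfolding reach_in_def by (auto simp: length_Suc_conv)

lemma reach1: "x \<in> verts G \<Longrightarrow> y \<in> verts G \<Longrightarrow> {x,y} \<in> edges G \<Longrightarrow> reach_in G 1 x y"
  unfolding reach_in_def walk_def by (rule exI[of _ "[x,y]"]) (auto simp: less_Suc_eq)

lemma reach1_edge: "reach_in G 1 x y \<Longrightarrow> {x,y} \<in> edges G"
  unfolding reach_in_def walk_def by (auto simp: length_Suc_conv)

lemma reach2: "x \<in> verts G \<Longrightarrow> y \<in> verts G \<Longrightarrow> c \<in> verts G \<Longrightarrow> {x,c} \<in> edges G
   \<Longrightarrow> {c,y} \<in> edges G \<Longrightarrow> reach_in G 2 x y"
  unfolding reach_in_def walk_def
  apply (rule exI[of _ "[x,c,y]"])
  apply (auto simp: less_Suc_eq numeral_2_eq_2)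
  done

lemma simple_edge_neq: "simple_graph G \<Longrightarrow> {x,y} \<in> edges G \<Longrightarrow> x \<noteq> y"
  unfolding simple_graph_def by (metis doubleton_eq_iff insert_absorb2)

lemma hub_gdist:
  assumes sg: "simple_graph G" and c: "c \<in> verts G"
    and hub: "\<forall>v\<in>verts G. v \<noteq> c \<longrightarrow> {c,v} \<in> edges G"
    and x: "x \<in> verts G" and y: "y \<in> verts G"
  shows "gdist G x y = (if x = y then 0 else if {x,y} \<in> edges G then 1 else 2)"
    and "reach_in G (gdist G x y) x y"
proof -
  have R: "reach_in G (if x = y then 0 else if {x,y} \<in> edges G then 1 else 2) x y"
  proof (cases "x = y")
    case True thus ?thesis using reach0 x by simp
  next
    case False
    show ?thesis
    proof (cases "{x,y} \<in> edges G")
      case True thus ?thesis using False reach1 x y by simp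
    next
      case ne: False
      have "x \<noteq> c" using False ne hub y by (auto simp: insert_commute)
      moreover have "y \<noteq> c" using False ne hub x by (auto simp: insert_commute)
      ultimately have "{x,c} \<in> edges G" "{c,y} \<in> edges G" using hub x y by (auto simp: insert_commute)
      thus ?thesis using reach2[OF x y c] False ne by simp
    qed
  qed
  have L: "(if x = y then 0 else if {x,y} \<in> edges G then 1 else 2) \<le> n" if "reach_in G n x y" for n
  proof -
    have "n \<noteq> 0 \<or> x = y" using reach0_eq[of G x y] that by (cases n) auto
    moreover have "n \<noteq> 1 \<or> {x,y} \<in> edges G" using reach1_edge[of G x y] that by auto
    moreover have "x \<noteq> y \<or> n \<noteq> 1"
      using reach1_edge[of G x y] that simple_edge_neq[OF sg] by auto
    ultimately show ?thesis by auto
  qed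
  show G: "gdist G x y = (if x = y then 0 else if {x,y} \<in> edges G then 1 else 2)"
    unfolding gdist_def by (rule Least_equality[where P="\<lambda>n. reach_in G n x y", OF R L])
  show "reach_in G (gdist G x y) x y" using R G by simp
qed


lemma fd_upper:
  assumes "finite (verts G)" "resolving_function G g"
  shows "frac_dim G \<le> sum g (verts G)"
  unfolding frac_dim_def
proof (rule cInf_lower)
  show "sum g (verts G) \<in> {sum g (verts G) |g. resolving_function G g}" using assms by auto
  show "bdd_below {sum g (verts G) |g. resolving_function G g}"
    by (rule bdd_belowI[of _ 0]) (auto simp: resolving_function_def intro: sum_nonneg)
qed

lemma fd_lower:
  assumes "resolving_function G g0" "\<And>g. resolving_function G g \<Longrightarrow> b \<le> sum g (verts G)"
  shows "b \<le> frac_dim G"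
  unfolding frac_dim_def
  by (rule cInf_greatest) (use assms in auto)

lemma trunc_eq:
  assumes "\<forall>x\<in>verts G. \<forall>y\<in>verts G. gdist G x y \<le> k + 1"
  shows "trunc_frac_dim k G = frac_dim G"
proof -
  have "trunc_resolving_set_of k G x y = resolving_set_of G x y"
    if "x \<in> verts G" "y \<in> verts G" for x y
    using assms that unfolding trunc_resolving_set_of_def resolving_set_of_def tdist_def
    by (auto simp: min_def)
  hence "trunc_resolving_function k G h = resolving_function G h" for h
    unfolding trunc_resolving_function_def resolving_function_def by auto
  thus ?thesis unfolding trunc_frac_dim_def frac_dim_def by simp
qed

definition cl :: "nat \<Rightarrow> nat \<Rightarrow> nat" where "cl m v = (v - 1) mod m"
definition rw :: "nat \<Rightarrow> nat \<Rightarrow> nat" where "rw m v = (v - 1) div m"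

definition starG :: "nat \<Rightarrow> graph" where
  "starG m = ({0..m*m}, (\<lambda>v. {0,v}) ` {1..m*m})"

definition rookG :: "nat \<Rightarrow> graph" where
  "rookG m = ({0..m*m}, (\<lambda>v. {0,v}) ` {1..m*m} \<union>
     {e. \<exists>u v. e = {u,v} \<and> u \<in> {1..m*m} \<and> v \<in> {1..m*m} \<and> u \<noteq> v \<and>
         (rw m u = rw m v \<or> cl m u = cl m v)})"

lemma star_verts: "verts (starG m) = {0..m*m}" by (simp add: starG_def verts_def)
lemma rook_verts: "verts (rookG m) = {0..m*m}" by (simp add: rookG_def verts_def)

lemma star_edge: "{x,y} \<in> edges (starG m) \<longleftrightarrow>
   (x = 0 \<and> y \<in> {1..m*m}) \<or> (y = 0 \<and> x \<in> {1..m*m})"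
  unfolding starG_def edges_def by (auto simp: doubleton_eq_iff)

lemma rook_edge: "{x,y} \<in> edges (rookG m) \<longleftrightarrow>
   (x = 0 \<and> y \<in> {1..m*m}) \<or> (y = 0 \<and> x \<in> {1..m*m}) \<or>
   (x \<in> {1..m*m} \<and> y \<in> {1..m*m} \<and> x \<noteq> y \<and> (rw m x = rw m y \<or> cl m x = cl m y))"
  unfolding rookG_def edges_def by (auto simp: doubleton_eq_iff)

lemma star_simple: "simple_graph (starG m)"
  unfolding simple_graph_def starG_def verts_def edges_def
proof (intro conjI ballI)
  fix e assume "e \<in> snd ({0..m*m}, (\<lambda>v. {0,v}) ` {1..m*m})"
  then obtain v where "e = {0,v}" "v \<in> {1..m*m}" by auto
  thus "\<exists>x y. x \<noteq> y \<and> x \<in> fst ({0..m*m}, (\<lambda>v. {0::nat,v}) ` {1..m*m}) \<and> y \<in> fst ({0..m*m}, (\<lambda>v. {0::nat,v}) ` {1..m*m}) \<and> e = {x, y}"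
    by (intro exI[of _ 0] exI[of _ v]) auto
qed simp

lemma rook_simple: "simple_graph (rookG m)"
  unfolding simple_graph_def
proof (intro conjI ballI)
  fix e assume "e \<in> edges (rookG m)"
  then obtain u v where "e = {u,v}" "u \<noteq> v" "u \<in> {0..m*m}" "v \<in> {0..m*m}"
    unfolding rookG_def edges_def by auto
  thus "\<exists>x y. x \<noteq> y \<and> x \<in> verts (rookG m) \<and> y \<in> verts (rookG m) \<and> e = {x, y}"
    by (auto simp: rook_verts)
qed (simp add: rook_verts)


lemma star_hub: "\<forall>v\<in>verts (starG m). v \<noteq> 0 \<longrightarrow> {0,v} \<in> edges (starG m)"
  by (auto simp: star_edge star_verts)
lemma rook_hub: "\<forall>v\<in>verts (rookG m). v \<noteq> 0 \<longrightarrow> {0,v} \<in> edges (rookG m)"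
  by (auto simp: rook_edge rook_verts)

lemmas star_gdist = hub_gdist[OF star_simple _ star_hub, unfolded star_verts, simplified]
lemmas rook_gdist = hub_gdist[OF rook_simple _ rook_hub, unfolded rook_verts, simplified]


lemma star_R:
  assumes "u \<in> {1..m*m}" "v \<in> {1..m*m}" "u \<noteq> v"
  shows "resolving_set_of (starG m) u v \<subseteq> {u,v}"
proof
  fix z assume z: "z \<in> resolving_set_of (starG m) u v"
  hence zV: "z \<in> {0..m*m}" and ne: "gdist (starG m) u z \<noteq> gdist (starG m) v z"
    unfolding resolving_set_of_def by (auto simp: star_verts)
  show "z \<in> {u,v}"
  proof (rule ccontr)
    assume "z \<notin> {u,v}"
    thus False using ne zV assms
      by (subst (asm) (1 2) star_gdist) (auto simp: star_edge)
  qed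
qed

lemma star_lb:
  assumes "resolving_function (starG m) g"
  shows "(real (m*m) - 1) / 2 \<le> sum g (verts (starG m))"
proof -
  let ?L = "{1..m*m}"
  have nn: "\<And>v. v \<in> {0..m*m} \<Longrightarrow> 0 \<le> g v" using assms
    by (auto simp: resolving_function_def star_verts)
  have pair: "g u + g v \<ge> 1" if "u \<in> ?L" "v \<in> ?L" "u \<noteq> v" for u v
  proof -
    have "1 \<le> sum g (resolving_set_of (starG m) u v)"
      using assms that by (auto simp: resolving_function_def star_verts)
    also have "\<dots> \<le> sum g {u,v}"
      by (rule sum_mono2) (use star_R[OF that] nn that in auto)
    also have "\<dots> = g u + g v" using that by simp
    finally show ?thesis .
  qed
  have sub: "sum g S \<le> sum g (verts (starG m))" if "S \<subseteq> ?L" for S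
    by (rule sum_mono2) (use that nn in \<open>auto simp: star_verts\<close>)
  show ?thesis
  proof (cases "\<forall>u\<in>?L. g u \<ge> 1/2")
    case True
    have "(real (m*m) - 1) / 2 \<le> real (card ?L) * (1/2)" by simp
    also have "\<dots> \<le> sum g ?L" using sum_mono[of ?L "\<lambda>_. 1/2" g] True by simp
    also have "\<dots> \<le> sum g (verts (starG m))" by (rule sub) simp
    finally show ?thesis .
  next
    case False
    then obtain u where u: "u \<in> ?L" "g u < 1/2" by auto
    have "\<forall>v\<in>?L - {u}. g v \<ge> 1/2" using pair u by force
    hence A: "real (card (?L - {u})) * (1/2) \<le> sum g (?L - {u})"
      using sum_mono[of "?L - {u}" "\<lambda>_. 1/2" g] by simp
    have B: "card (?L - {u}) = m*m - 1" using u by simp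
    have C: "real (m*m - 1) = real (m*m) - 1" using u by (auto simp del: of_nat_mult simp add: of_nat_diff)
    have D: "sum g (?L - {u}) \<le> sum g (verts (starG m))" by (rule sub) auto
    have "(real (m*m) - 1) / 2 = real (card (?L - {u})) * (1/2)" using B C by simp
    also note A
    also note D
    finally show ?thesis .
  qed
qed


lemma enc_props:
  assumes "0 < m" "v \<in> {1..m*m}"
  shows "rw m v < m" "cl m v < m" "v = 1 + cl m v + m * rw m v"
proof -
  have "v - 1 < m * m" using assms by auto
  thus "rw m v < m" unfolding rw_def by (simp add: less_mult_imp_div_less)
  show "cl m v < m" unfolding cl_def using assms by simp
  show "v = 1 + cl m v + m * rw m v" unfolding cl_def rw_def using assms
    by (metis add.commute atLeastAtMost_iff le_add_diff_inverse2 mod_mult_div_eq add.assoc)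
qed

lemma dec:
  assumes "j < m"
  shows "cl m (1 + j + m*i) = j" "rw m (1 + j + m*i) = i"
  using assms unfolding cl_def rw_def by auto

lemma enc_range:
  fixes i j m :: nat
  assumes "i < m" "j < m"
  shows "1 + j + m*i \<in> {1..m*m}"
proof -
  have "1 + j + m*i \<le> m + m*i" using assms by linarith
  also have "\<dots> = m * (i+1)" by simp
  also have "\<dots> \<le> m * m" using assms by (intro mult_le_mono2) simp
  finally show ?thesis by simp
qed

lemma rook_R_mem:
  assumes "x \<in> {1..m*m}" "y \<in> {1..m*m}" "z \<in> {1..m*m}" "x \<noteq> y" "z \<noteq> y"
    "rw m z \<noteq> rw m y" "cl m z \<noteq> cl m y" "rw m z = rw m x \<or> cl m z = cl m x"
  shows "z \<in> resolving_set_of (rookG m) x y"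
proof (cases "z = x")
  case True
  thus ?thesis using assms unfolding resolving_set_of_def
    by (auto simp: rook_verts rook_gdist)
next
  case False
  have "gdist (rookG m) x z = 1" using assms False by (auto simp: rook_gdist rook_edge)
  moreover have "gdist (rookG m) y z = 2" using assms False by (auto simp: rook_gdist rook_edge)
  ultimately show ?thesis using assms unfolding resolving_set_of_def by (auto simp: rook_verts)
qed


lemma rook_res:
  assumes m: "2 \<le> m"
  shows "resolving_function (rookG m) (\<lambda>v. if v = 0 then 1 else 1 / (real m - 1))"
    (is "resolving_function _ ?g")
proof -
  have m1: "real m - 1 \<ge> 1" using m by simp
  have nn: "0 \<le> ?g v" "?g v \<le> 1" for v using m1 by auto
  have fin: "finite (resolving_set_of (rookG m) x y)" for x y
    unfolding resolving_set_of_def rook_verts by simp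
  have main: "1 \<le> sum ?g (resolving_set_of (rookG m) x y)"
    if x: "x \<in> {0..m*m}" and y: "y \<in> {0..m*m}" and xy: "x \<noteq> y" for x y
  proof (cases "x = 0 \<or> y = 0")
    case True
    have "0 \<in> resolving_set_of (rookG m) x y"
      using True x y xy unfolding resolving_set_of_def
      by (auto simp: rook_verts rook_gdist)
    hence "?g 0 \<le> sum ?g (resolving_set_of (rookG m) x y)"
      by (intro member_le_sum fin nn(1))
    thus ?thesis by simp
  next
    case False
    hence x1: "x \<in> {1..m*m}" and y1: "y \<in> {1..m*m}" using x y by auto
    have m0: "0 < m" using m by simp
    obtain S where S: "S \<subseteq> resolving_set_of (rookG m) x y" "0 \<notin> S" "card S = m - 1"
    proof (cases "cl m x = cl m y")
      case False
      let ?S = "(\<lambda>i. 1 + cl m x + m*i) ` ({..<m} - {rw m y})"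
      have inj: "inj_on (\<lambda>i. 1 + cl m x + m*i) ({..<m} - {rw m y})"
        using m0 by (auto simp: inj_on_def)
      have "card ?S = m - 1"
        using card_image[OF inj] enc_props(1)[OF m0 y1] by simp
      moreover have "?S \<subseteq> resolving_set_of (rookG m) x y"
      proof
        fix z assume "z \<in> ?S"
        then obtain i where i: "i < m" "i \<noteq> rw m y" "z = 1 + cl m x + m*i" by auto
        have cx: "cl m x < m" using enc_props[OF m0 x1] by simp
        show "z \<in> resolving_set_of (rookG m) x y"
          by (rule rook_R_mem[OF x1 y1]) (use i cx False xy enc_range[OF i(1) cx] dec[OF cx] in auto)
      qed
      moreover have "0 \<notin> ?S" by auto
      ultimately show ?thesis using that by blast
    next
      case True
      hence rne: "rw m x \<noteq> rw m y" using xy enc_props(3)[OF m0 x1] enc_props(3)[OF m0 y1] by metis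
      let ?S = "(\<lambda>j. 1 + j + m * rw m x) ` ({..<m} - {cl m y})"
      have inj: "inj_on (\<lambda>j. 1 + j + m * rw m x) ({..<m} - {cl m y})"
        by (auto simp: inj_on_def)
      have "card ?S = m - 1"
        using card_image[OF inj] enc_props(2)[OF m0 y1] by simp
      moreover have "?S \<subseteq> resolving_set_of (rookG m) x y"
      proof
        fix z assume "z \<in> ?S"
        then obtain j where j: "j < m" "j \<noteq> cl m y" "z = 1 + j + m * rw m x" by auto
        have rx: "rw m x < m" using enc_props[OF m0 x1] by simp
        show "z \<in> resolving_set_of (rookG m) x y"
          by (rule rook_R_mem[OF x1 y1]) (use j rx rne xy enc_range[OF rx j(1)] dec[OF j(1)] in auto)
      qed
      moreover have "0 \<notin> ?S" by auto
      ultimately show ?thesis using that by blast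
    qed
    have "sum ?g S = real (card S) * (1 / (real m - 1))"
    proof -
      have "sum ?g S = sum (\<lambda>_. 1 / (real m - 1)) S"
        by (rule sum.cong) (use S(2) in auto)
      thus ?thesis by simp
    qed
    also have "\<dots> = 1" using S(3) m m1 by (simp add: of_nat_diff)
    finally have "sum ?g S = 1" .
    moreover have "sum ?g S \<le> sum ?g (resolving_set_of (rookG m) x y)"
      by (rule sum_mono2[OF fin S(1)]) (rule nn(1))
    ultimately show ?thesis by simp
  qed
  show ?thesis unfolding resolving_function_def using nn main by (auto simp: rook_verts)
qed


lemma ratio:
  fixes a b M C :: real
  assumes "a \<ge> (M*M - 1)/2" "1 \<le> b" "b \<le> 1 + M*M/(M-1)" "M \<ge> 3" "M - 1 > 6*C" "C > 0"
  shows "a / b > C"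
proof -
  have "M*M/(M-1) \<le> M + 2" using assms(4) by (simp add: divide_le_eq algebra_simps)
  hence "b \<le> 2*M" using assms by linarith
  hence "C*b \<le> C*(2*M)" using assms by (intro mult_left_mono) auto
  also have "\<dots> < M * (M-1) / 2"
  proof -
    have "M * (6*C) < M * (M-1)" using assms by (intro mult_strict_left_mono) auto
    moreover have "0 < C * M" using assms by simp
    ultimately show ?thesis by (simp add: algebra_simps)
  qed
  also have "\<dots> \<le> (M*M - 1)/2"
  proof -
    have "M*(M-1) \<le> M*M - 1" using assms by (simp add: algebra_simps)
    thus ?thesis by (intro divide_right_mono) auto
  qed
  also have "\<dots> \<le> a" using assms by simp
  finally show ?thesis using assms by (simp add: less_divide_eq mult.commute)
qed

lemma hub_conn:
  assumes sg: "simple_graph G" and c: "c \<in> verts G"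
    and hub: "\<forall>v\<in>verts G. v \<noteq> c \<longrightarrow> {c,v} \<in> edges G"
  shows "connected_graph G"
  unfolding connected_graph_def using hub_gdist(2)[OF sg c hub] sg c by blast

lemma hub_one:
  assumes sg: "simple_graph G" and c: "c \<in> verts G"
    and hub: "\<forall>v\<in>verts G. v \<noteq> c \<longrightarrow> {c,v} \<in> edges G"
  shows "resolving_function G (\<lambda>_. 1)"
proof -
  have fin: "finite (verts G)" using sg simple_graph_def by blast
  have "1 \<le> sum (\<lambda>_. 1::real) (resolving_set_of G x y)"
    if "x \<in> verts G" "y \<in> verts G" "x \<noteq> y" for x y
  proof -
    have "x \<in> resolving_set_of G x y" unfolding resolving_set_of_def
      using that hub_gdist(1)[OF sg c hub] by auto
    moreover have "finite (resolving_set_of G x y)" using fin unfolding resolving_set_of_def by auto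
    ultimately show ?thesis by (auto simp: card_gt_0_iff Suc_le_eq)
  qed
  thus ?thesis unfolding resolving_function_def by auto
qed

lemma lower1:
  assumes "resolving_function G g0" "finite (verts G)" "x \<in> verts G" "y \<in> verts G" "x \<noteq> y"
  shows "1 \<le> frac_dim G"
proof (rule fd_lower[OF assms(1)])
  fix g assume g: "resolving_function G g"
  have "1 \<le> sum g (resolving_set_of G x y)" using g assms unfolding resolving_function_def by auto
  also have "\<dots> \<le> sum g (verts G)"
    by (rule sum_mono2[OF assms(2)]) (use g in \<open>auto simp: resolving_set_of_def resolving_function_def\<close>)
  finally show "1 \<le> sum g (verts G)" .
qed


lemma rook_sum:
  assumes "2 \<le> m"
  shows "sum (\<lambda>v. if v = 0 then 1 else 1 / (real m - 1)) (verts (rookG m)) = 1 + real m * real m / (real m - 1)"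
proof -
  have V: "verts (rookG m) = insert 0 {1..m*m}" by (auto simp: rook_verts)
  have "sum (\<lambda>v. if v = 0 then 1 else 1 / (real m - 1)) {1..m*m} = sum (\<lambda>_. 1 / (real m - 1)) {1..m*m}"
    by (rule sum.cong) auto
  thus ?thesis unfolding V by simp
qed

theorem corollary4p2:
  fixes k :: nat and C :: real
  assumes "k \<ge> 1" and "C > 0"
  shows "\<exists>H G. connected_graph H \<and> connected_graph G \<and> subgraph H G \<and>
           frac_dim H / frac_dim G > C \<and>
           trunc_frac_dim k H / trunc_frac_dim k G > C"
proof -
  define m where "m = nat \<lceil>6*C\<rceil> + 3"
  have m3: "m \<ge> 3" unfolding m_def by simp
  have mC: "real m - 1 > 6*C"
  proof -
    have "real (nat \<lceil>6*C\<rceil>) \<ge> 6*C" by linarith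
    thus ?thesis unfolding m_def by simp
  qed
  have hubS: "0 \<in> verts (starG m)" by (simp add: star_verts)
  have hubR: "0 \<in> verts (rookG m)" by (simp add: rook_verts)
  have cS: "connected_graph (starG m)" by (rule hub_conn[OF star_simple hubS star_hub])
  have cR: "connected_graph (rookG m)" by (rule hub_conn[OF rook_simple hubR rook_hub])
  have sub: "subgraph (starG m) (rookG m)"
    unfolding subgraph_def by (simp add: starG_def rookG_def edges_def verts_def Un_upper1)
  have a: "(real (m*m) - 1)/2 \<le> frac_dim (starG m)"
    by (rule fd_lower[OF hub_one[OF star_simple hubS star_hub] star_lb])
  have m1: "1 \<in> verts (rookG m)" using m3 by (simp add: rook_verts)
  have b1: "1 \<le> frac_dim (rookG m)"
    by (rule lower1[OF hub_one[OF rook_simple hubR rook_hub] _ hubR m1]) (simp_all add: rook_verts)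
  have b2: "frac_dim (rookG m) \<le> 1 + real m * real m / (real m - 1)"
  proof -
    have "frac_dim (rookG m) \<le> sum (\<lambda>v. if v = 0 then 1 else 1 / (real m - 1)) (verts (rookG m))"
      by (rule fd_upper[OF _ rook_res]) (use m3 in \<open>simp_all add: rook_verts\<close>)
    thus ?thesis using rook_sum[of m] m3 by simp
  qed
  have r: "frac_dim (starG m) / frac_dim (rookG m) > C"
    by (rule ratio[OF _ b1 b2]) (use a m3 mC assms in simp_all)
  have tS: "trunc_frac_dim k (starG m) = frac_dim (starG m)"
  proof (rule trunc_eq, intro ballI)
    fix x y assume "x \<in> verts (starG m)" "y \<in> verts (starG m)"
    thus "gdist (starG m) x y \<le> k + 1" using assms(1) star_gdist(1)[of x m y] by (simp add: star_verts)
  qed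
  have tR: "trunc_frac_dim k (rookG m) = frac_dim (rookG m)"
  proof (rule trunc_eq, intro ballI)
    fix x y assume "x \<in> verts (rookG m)" "y \<in> verts (rookG m)"
    thus "gdist (rookG m) x y \<le> k + 1" using assms(1) rook_gdist(1)[of x m y] by (simp add: rook_verts)
  qed
  show ?thesis using cS cR sub r tS tR by (intro exI[of _ "starG m"] exI[of _ "rookG m"]) simp
qed

end
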